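(* Fix real numbers $\rho,\sigma$ with $\rho,\sigma\neq 0$ and $\rho\neq\pm\sigma$. For $(x,y)\in\mathbb{R}^2$ let $\ell_a$ and $\ell_c$ be the lines through $(0,0)$ with slopes $\rho$ and $-\rho$, and let $\ell_b$ and $\ell_d$ be the lines through $(x,y)$ with slopes $\sigma$ and $-\sigma$. Let $P_1=\ell_d\cap\ell_a$, $P_2=\ell_a\cap\ell_b$, $P_3=\ell_b\cap\ell_c$, $P_4=\ell_c\cap\ell_d$ be the vertices of the (possibly nonconvex or degenerate) quadrilateral $P_1P_2P_3P_4$. Fix unit vectors $u_a,u_b,u_c,u_d$ parallel to $\ell_a,\ell_b,\ell_c,\ell_d$ respectively, and define the signed lengths $a=(P_2-P_1)\cdot u_a$, $b=(P_3-P_2)\cdot u_b$, $c=(P_4-P_3)\cdot u_c$, $d=(P_1-P_4)\cdot u_d$, and the signed area $A=\frac12\sum_{i=1}^{4}\det(P_i,P_{i+1})$ (indices mod $4$), where the unit vectors are chosen and the overall sign of the area is adjusted (by multiplying $A$ by a fixed $\pm1$) so that $a,b,c,d,A>0$ at some parameter $(x,y)$ for which $P_1P_2P_3P_4$ is convex (assume such a parameter exists). Set $B^2=(s-a)(s-b)(s-c)(s-d)$ with $s=\frac{a+b+c+d}{2}$. Then, as functions of $(x,y)$, there are constants $\lambda,\mu$ (depending on $\rho,\sigma$ and the sign choices) such that $$A(x,y)=\lambda\,xy,\qquad B^2(x,y)=\mu\,(xy)^2 .$$ Consequently $A^2/B^2$ is constant on the set of $(x,y)$ for which $P_1P_2P_3P_4$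 is a convex quadrilateral.
   Context: $\det(P,Q)$ denotes the $2\times2$ determinant of the column vectors $P,Q\in\mathbb{R}^2$. The signed area of a closed polygon is the sum of areas of the regions it bounds, weighted by winding number; for a quadrilateral it equals $\frac12\sum_i\det(P_i,P_{i+1})$ up to orientation sign. *)

theory Defs
  imports "HOL-Analysis.Analysis"
begin

type_synonym pt = "real \<times> real"

definition det2 :: "pt \<Rightarrow> pt \<Rightarrow> real" where
  "det2 P Q = fst P * snd Q - snd P * fst Q"

definition line_slope :: "pt \<Rightarrow> real \<Rightarrow> pt set" where
  "line_slope p m = {q. snd q - snd p = m * (fst q - fst p)}"

definition meet :: "pt set \<Rightarrow> pt set \<Rightarrow> pt" where
  "meet L M = (THE p. p \<in> L \<inter> M)"

definition line_a :: "real \<Rightarrow> real \<Rightarrow> real \<Rightarrow> real \<Rightarrow> pt set" where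
  "line_a \<rho> \<sigma> x y = line_slope (0,0) \<rho>"
definition line_b :: "real \<Rightarrow> real \<Rightarrow> real \<Rightarrow> real \<Rightarrow> pt set" where
  "line_b \<rho> \<sigma> x y = line_slope (x,y) \<sigma>"
definition line_c :: "real \<Rightarrow> real \<Rightarrow> real \<Rightarrow> real \<Rightarrow> pt set" where
  "line_c \<rho> \<sigma> x y = line_slope (0,0) (-\<rho>)"
definition line_d :: "real \<Rightarrow> real \<Rightarrow> real \<Rightarrow> real \<Rightarrow> pt set" where
  "line_d \<rho> \<sigma> x y = line_slope (x,y) (-\<sigma>)"

definition P1 :: "real \<Rightarrow> real \<Rightarrow> real \<Rightarrow> real \<Rightarrow> pt" where
  "P1 \<rho> \<sigma> x y = meet (line_d \<rho> \<sigma> x y) (line_a \<rho> \<sigma> x y)"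
definition P2 :: "real \<Rightarrow> real \<Rightarrow> real \<Rightarrow> real \<Rightarrow> pt" where
  "P2 \<rho> \<sigma> x y = meet (line_a \<rho> \<sigma> x y) (line_b \<rho> \<sigma> x y)"
definition P3 :: "real \<Rightarrow> real \<Rightarrow> real \<Rightarrow> real \<Rightarrow> pt" where
  "P3 \<rho> \<sigma> x y = meet (line_b \<rho> \<sigma> x y) (line_c \<rho> \<sigma> x y)"
definition P4 :: "real \<Rightarrow> real \<Rightarrow> real \<Rightarrow> real \<Rightarrow> pt" where
  "P4 \<rho> \<sigma> x y = meet (line_c \<rho> \<sigma> x y) (line_d \<rho> \<sigma> x y)"

definition quad_area :: "pt \<Rightarrow> pt \<Rightarrow> pt \<Rightarrow> pt \<Rightarrow> real" where
  "quad_area Q1 Q2 Q3 Q4 = (det2 Q1 Q2 + det2 Q2 Q3 + det2 Q3 Q4 + det2 Q4 Q1) / 2"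

definition turn :: "pt \<Rightarrow> pt \<Rightarrow> pt \<Rightarrow> real" where
  "turn A B C = det2 (B - A) (C - B)"

definition convex_quad :: "pt \<Rightarrow> pt \<Rightarrow> pt \<Rightarrow> pt \<Rightarrow> bool" where
  "convex_quad Q1 Q2 Q3 Q4 \<longleftrightarrow>
     (turn Q1 Q2 Q3 > 0 \<and> turn Q2 Q3 Q4 > 0 \<and> turn Q3 Q4 Q1 > 0 \<and> turn Q4 Q1 Q2 > 0) \<or>
     (turn Q1 Q2 Q3 < 0 \<and> turn Q2 Q3 Q4 < 0 \<and> turn Q3 Q4 Q1 < 0 \<and> turn Q4 Q1 Q2 < 0)"

definition quadP_convex :: "real \<Rightarrow> real \<Rightarrow> real \<Rightarrow> real \<Rightarrow> bool" where
  "quadP_convex \<rho> \<sigma> x y =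
     convex_quad (P1 \<rho> \<sigma> x y) (P2 \<rho> \<sigma> x y) (P3 \<rho> \<sigma> x y) (P4 \<rho> \<sigma> x y)"

definition side_a :: "real \<Rightarrow> real \<Rightarrow> pt \<Rightarrow> real \<Rightarrow> real \<Rightarrow> real" where
  "side_a \<rho> \<sigma> ua x y = (P2 \<rho> \<sigma> x y - P1 \<rho> \<sigma> x y) \<bullet> ua"
definition side_b :: "real \<Rightarrow> real \<Rightarrow> pt \<Rightarrow> real \<Rightarrow> real \<Rightarrow> real" where
  "side_b \<rho> \<sigma> ub x y = (P3 \<rho> \<sigma> x y - P2 \<rho> \<sigma> x y) \<bullet> ub"
definition side_c :: "real \<Rightarrow> real \<Rightarrow> pt \<Rightarrow> real \<Rightarrow> real \<Rightarrow> real" where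
  "side_c \<rho> \<sigma> uc x y = (P4 \<rho> \<sigma> x y - P3 \<rho> \<sigma> x y) \<bullet> uc"
definition side_d :: "real \<Rightarrow> real \<Rightarrow> pt \<Rightarrow> real \<Rightarrow> real \<Rightarrow> real" where
  "side_d \<rho> \<sigma> ud x y = (P1 \<rho> \<sigma> x y - P4 \<rho> \<sigma> x y) \<bullet> ud"

definition areaA :: "real \<Rightarrow> real \<Rightarrow> real \<Rightarrow> real \<Rightarrow> real \<Rightarrow> real" where
  "areaA e \<rho> \<sigma> x y = e * quad_area (P1 \<rho> \<sigma> x y) (P2 \<rho> \<sigma> x y) (P3 \<rho> \<sigma> x y) (P4 \<rho> \<sigma> x y)"

definition brahm :: "real \<Rightarrow> real \<Rightarrow> real \<Rightarrow> real \<Rightarrow> real" where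
  "brahm a b c d = (let s = (a + b + c + d) / 2 in (s - a) * (s - b) * (s - c) * (s - d))"

definition Bsq :: "real \<Rightarrow> real \<Rightarrow> pt \<Rightarrow> pt \<Rightarrow> pt \<Rightarrow> pt \<Rightarrow> real \<Rightarrow> real \<Rightarrow> real" where
  "Bsq \<rho> \<sigma> ua ub uc ud x y =
     brahm (side_a \<rho> \<sigma> ua x y) (side_b \<rho> \<sigma> ub x y) (side_c \<rho> \<sigma> uc x y) (side_d \<rho> \<sigma> ud x y)"

end

theory Submission imports Defs begin

definition mx :: "pt \<Rightarrow> real \<Rightarrow> pt \<Rightarrow> real \<Rightarrow> real" where
 "mx p m q n = (snd q - snd p + m * fst p - n * fst q) / (m - n)"

lemma meet_slope:
  assumes "m \<noteq> n"
  shows "meet (line_slope p m) (line_slope q n) = (mx p m q n, snd p + m * (mx p m q n - fst p))"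
  unfolding meet_def
proof (rule the_equality)
  have "m - n \<noteq> 0" using assms by simp
  then show "(mx p m q n, snd p + m * (mx p m q n - fst p)) \<in> line_slope p m \<inter> line_slope q n"
    unfolding line_slope_def mx_def by (simp add: field_simps)
next
  fix r assume r: "r \<in> line_slope p m \<inter> line_slope q n"
  have "m - n \<noteq> 0" using assms by simp
  from r have "fst r = mx p m q n" unfolding line_slope_def mx_def
    using \<open>m - n \<noteq> 0\<close> by (simp add: field_simps)
  then show "r = (mx p m q n, snd p + m * (mx p m q n - fst p))"
    using r unfolding line_slope_def by (cases r) auto
qed

definition X1 where "X1 \<rho> \<sigma> x y = (y+\<sigma>*x)/(\<rho>+\<sigma>)"
definition X2 where "X2 \<rho> \<sigma> x y = (y-\<sigma>*x)/(\<rho>-\<sigma>)"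
definition X3 where "X3 \<rho> \<sigma> x y = (\<sigma>*x-y)/(\<rho>+\<sigma>)"
definition X4 where "X4 \<rho> \<sigma> x y = (y+\<sigma>*x)/(\<sigma>-\<rho>)"

locale rs =
  fixes \<rho> \<sigma> :: real
  assumes r0: "\<rho> \<noteq> 0" and s0: "\<sigma> \<noteq> 0" and rs1: "\<rho> \<noteq> \<sigma>" and rs2: "\<rho> \<noteq> - \<sigma>"
begin

lemma nz: "\<rho> + \<sigma> \<noteq> 0" "\<rho> - \<sigma> \<noteq> 0" "\<sigma> - \<rho> \<noteq> 0" "\<rho>\<^sup>2 - \<sigma>\<^sup>2 \<noteq> 0"
   "\<rho>*\<rho> - \<sigma>*\<sigma> \<noteq> 0" "\<sigma>*\<sigma> - \<rho>*\<rho> \<noteq> 0"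
  using rs1 rs2 r0 s0 apply auto
  apply (metis add.inverse_inverse power2_eq_iff)
  apply (metis add.inverse_inverse power2_eq_iff power2_eq_square)
  apply (metis add.inverse_inverse power2_eq_iff power2_eq_square)
  done

lemma P1e: "P1 \<rho> \<sigma> x y = (X1 \<rho> \<sigma> x y, \<rho> * X1 \<rho> \<sigma> x y)"
  unfolding P1_def line_a_def line_d_def X1_def
  using nz apply (subst meet_slope) apply (simp add: rs2)
  by (simp add: mx_def field_simps)
lemma P2e: "P2 \<rho> \<sigma> x y = (X2 \<rho> \<sigma> x y, \<rho> * X2 \<rho> \<sigma> x y)"
  unfolding P2_def line_a_def line_b_def X2_def
  using nz apply (subst meet_slope) apply (simp add: rs1)
  by (simp add: mx_def field_simps)
lemma P3e: "P3 \<rho> \<sigma> x y = (X3 \<rho> \<sigma> x y, - \<rho> * X3 \<rho> \<sigma> x y)"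
  unfolding P3_def line_c_def line_b_def X3_def
  using nz apply (subst meet_slope) using rs2 apply linarith
  by (simp add: mx_def field_simps)
lemma P4e: "P4 \<rho> \<sigma> x y = (X4 \<rho> \<sigma> x y, - \<rho> * X4 \<rho> \<sigma> x y)"
  unfolding P4_def line_c_def line_d_def X4_def
  using nz apply (subst meet_slope) using rs1 apply linarith
  by (simp add: mx_def field_simps)

lemma area: "areaA e \<rho> \<sigma> x y = (e * (-4*\<rho>*\<sigma>/(\<rho>\<^sup>2-\<sigma>\<^sup>2))) * (x*y)"
proof -
  have D: "\<rho>\<^sup>2-\<sigma>\<^sup>2 = (\<rho>+\<sigma>)*(\<rho>-\<sigma>)" by (simp add: algebra_simps power2_eq_square)
  have a: "X4 \<rho> \<sigma> x y * X1 \<rho> \<sigma> x y = -((y+\<sigma>*x)^2)/((\<rho>+\<sigma>)*(\<rho>-\<sigma>))"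
    unfolding X1_def X4_def using nz by (simp add: field_simps power2_eq_square)
  have b: "X2 \<rho> \<sigma> x y * X3 \<rho> \<sigma> x y = -((y-\<sigma>*x)^2)/((\<rho>+\<sigma>)*(\<rho>-\<sigma>))"
    unfolding X2_def X3_def using nz by (simp add: field_simps power2_eq_square)
  have "areaA e \<rho> \<sigma> x y = e * \<rho> * (X4 \<rho> \<sigma> x y * X1 \<rho> \<sigma> x y - X2 \<rho> \<sigma> x y * X3 \<rho> \<sigma> x y)"
    unfolding areaA_def quad_area_def P1e P2e P3e P4e det2_def by (simp add: field_simps)
  also have "\<dots> = e * \<rho> * (((y-\<sigma>*x)^2 - (y+\<sigma>*x)^2)/((\<rho>+\<sigma>)*(\<rho>-\<sigma>)))"
    unfolding a b by (simp add: diff_divide_distrib)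
  also have "\<dots> = (e * (-4*\<rho>*\<sigma>/(\<rho>\<^sup>2-\<sigma>\<^sup>2))) * (x*y)"
    unfolding D by (simp add: power2_eq_square algebra_simps)
  finally show ?thesis .
qed


definition "DD = (\<rho>+\<sigma>)*(\<rho>-\<sigma>)"
lemma DD0: "DD \<noteq> 0" unfolding DD_def using nz by simp
definition "u1 x y = 2*\<sigma>*(y-\<rho>*x)/DD"
definition "u2 x y = 2*\<rho>*(\<sigma>*x-y)/DD"
definition "u3 x y = -2*\<sigma>*(y+\<rho>*x)/DD"
definition "u4 x y = 2*\<rho>*(y+\<sigma>*x)/DD"

lemma U1: "X2 \<rho> \<sigma> x y - X1 \<rho> \<sigma> x y = u1 x y"
  unfolding X1_def X2_def u1_def DD_def using nz by (simp add: field_simps; simp add: algebra_simps)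
lemma U2: "X3 \<rho> \<sigma> x y - X2 \<rho> \<sigma> x y = u2 x y"
  unfolding X3_def X2_def u2_def DD_def using nz by (simp add: field_simps; simp add: algebra_simps)
lemma U3: "X4 \<rho> \<sigma> x y - X3 \<rho> \<sigma> x y = u3 x y"
  unfolding X3_def X4_def u3_def DD_def using nz by (simp add: field_simps; simp add: algebra_simps)
lemma U4: "X1 \<rho> \<sigma> x y - X4 \<rho> \<sigma> x y = u4 x y"
  unfolding X1_def X4_def u4_def DD_def using nz by (simp add: field_simps; simp add: algebra_simps)

lemma brahm1: "brahm (A*u1 x y) (B*u2 x y) (A*u3 x y) (-(B*u4 x y))
   = 16*\<rho>^2*\<sigma>^2*(A*\<sigma>+B*\<rho>)*(A+B)*(A*\<sigma>-B*\<rho>)*(B-A)/DD^4 * (x*y)^2"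
proof -
  let ?a = "A*u1 x y" and ?b = "B*u2 x y" and ?c = "A*u3 x y" and ?d = "-(B*u4 x y)"
  have 1: "(?a+?b+?c+?d)/2 - ?a = -2*y*(A*\<sigma>+B*\<rho>)/DD"
    unfolding u1_def u2_def u3_def u4_def using DD0 by (simp add: field_simps; simp add: algebra_simps)
  have 2: "(?a+?b+?c+?d)/2 - ?b = -2*\<rho>*\<sigma>*x*(A+B)/DD"
    unfolding u1_def u2_def u3_def u4_def using DD0 by (simp add: field_simps; simp add: algebra_simps)
  have 3: "(?a+?b+?c+?d)/2 - ?c = 2*y*(A*\<sigma>-B*\<rho>)/DD"
    unfolding u1_def u2_def u3_def u4_def using DD0 by (simp add: field_simps; simp add: algebra_simps)
  have 4: "(?a+?b+?c+?d)/2 - ?d = 2*\<rho>*\<sigma>*x*(B-A)/DD"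
    unfolding u1_def u2_def u3_def u4_def using DD0 by (simp add: field_simps; simp add: algebra_simps)
  show ?thesis unfolding brahm_def Let_def 1 2 3 4 using DD0
    by (simp add: field_simps power2_eq_square; simp add: algebra_simps power_def)
qed

lemma brahm2: "brahm (A*u1 x y) (B*u2 x y) (-(A*u3 x y)) (B*u4 x y)
   = 16*\<rho>^2*\<sigma>^2*(A*\<sigma>+B*\<rho>)*(A+B)*(A*\<sigma>-B*\<rho>)*(B-A)/DD^4 * (x*y)^2"
proof -
  let ?a = "A*u1 x y" and ?b = "B*u2 x y" and ?c = "-(A*u3 x y)" and ?d = "B*u4 x y"
  have 1: "(?a+?b+?c+?d)/2 - ?a = 2*\<rho>*\<sigma>*x*(A+B)/DD"
    unfolding u1_def u2_def u3_def u4_def using DD0 by (simp add: field_simps; simp add: algebra_simps)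
  have 2: "(?a+?b+?c+?d)/2 - ?b = 2*y*(A*\<sigma>+B*\<rho>)/DD"
    unfolding u1_def u2_def u3_def u4_def using DD0 by (simp add: field_simps; simp add: algebra_simps)
  have 3: "(?a+?b+?c+?d)/2 - ?c = 2*\<rho>*\<sigma>*x*(B-A)/DD"
    unfolding u1_def u2_def u3_def u4_def using DD0 by (simp add: field_simps; simp add: algebra_simps)
  have 4: "(?a+?b+?c+?d)/2 - ?d = 2*y*(A*\<sigma>-B*\<rho>)/DD"
    unfolding u1_def u2_def u3_def u4_def using DD0 by (simp add: field_simps; simp add: algebra_simps)
  show ?thesis unfolding brahm_def Let_def 1 2 3 4 using DD0
    by (simp add: field_simps power2_eq_square; simp add: algebra_simps power_def)
qed


lemma D1: "P2 \<rho> \<sigma> x y - P1 \<rho> \<sigma> x y = (u1 x y, \<rho> * u1 x y)"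
  unfolding P1e P2e U1[symmetric] by (simp add: algebra_simps)
lemma D3: "P4 \<rho> \<sigma> x y - P3 \<rho> \<sigma> x y = (u3 x y, -\<rho> * u3 x y)"
  unfolding P3e P4e U3[symmetric] by (simp add: algebra_simps)
lemma D2: "P3 \<rho> \<sigma> x y - P2 \<rho> \<sigma> x y = (u2 x y, \<sigma> * u2 x y)"
proof -
  have "- \<rho> * X3 \<rho> \<sigma> x y - \<rho> * X2 \<rho> \<sigma> x y = \<sigma> * u2 x y"
    unfolding X2_def X3_def u2_def DD_def using nz by (simp add: field_simps; simp add: algebra_simps)
  then show ?thesis unfolding P2e P3e U2[symmetric] by simp
qed
lemma D4: "P1 \<rho> \<sigma> x y - P4 \<rho> \<sigma> x y = (u4 x y, -\<sigma> * u4 x y)"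
proof -
  have "\<rho> * X1 \<rho> \<sigma> x y + \<rho> * X4 \<rho> \<sigma> x y = - \<sigma> * u4 x y"
    unfolding X1_def X4_def u4_def DD_def using nz by (simp add: field_simps; simp add: algebra_simps)
  then show ?thesis unfolding P1e P4e U4[symmetric] by simp
qed

lemma unitv: assumes "norm u = 1" "det2 u (1, m) = 0"
  shows "u = (fst u, m * fst u)" "(fst u)^2 * (1 + m^2) = 1"
proof -
  from assms(2) have s: "snd u = m * fst u" unfolding det2_def by (simp add: algebra_simps)
  then show "u = (fst u, m * fst u)" by (metis prod.collapse)
  have "(norm u)^2 = (fst u)^2 + (snd u)^2"
    by (cases u) (simp add: norm_Pair)
  then show "(fst u)^2 * (1 + m^2) = 1" using assms(1) s by (simp add: algebra_simps power_mult_distrib)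
qed

lemma sideA: assumes "norm u = 1" "det2 u (1, \<rho>) = 0"
  shows "side_a \<rho> \<sigma> u x y = (fst u * (1+\<rho>^2)) * u1 x y"
  apply (subst unitv(1)[OF assms]) unfolding side_a_def D1
  by (simp add: algebra_simps power2_eq_square)
lemma sideB: assumes "norm u = 1" "det2 u (1, \<sigma>) = 0"
  shows "side_b \<rho> \<sigma> u x y = (fst u * (1+\<sigma>^2)) * u2 x y"
  apply (subst unitv(1)[OF assms]) unfolding side_b_def D2
  by (simp add: algebra_simps power2_eq_square)
lemma sideC: assumes "norm u = 1" "det2 u (1, -\<rho>) = 0"
  shows "side_c \<rho> \<sigma> u x y = (fst u * (1+\<rho>^2)) * u3 x y"
  apply (subst unitv(1)[OF assms]) unfolding side_c_def D3
  by (simp add: algebra_simps power2_eq_square)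
lemma sideD: assumes "norm u = 1" "det2 u (1, -\<sigma>) = 0"
  shows "side_d \<rho> \<sigma> u x y = (fst u * (1+\<sigma>^2)) * u4 x y"
  apply (subst unitv(1)[OF assms]) unfolding side_d_def D4
  by (simp add: algebra_simps power2_eq_square)

lemma convex_neg: assumes "quadP_convex \<rho> \<sigma> x y"
  shows "u1 x y * u2 x y * u3 x y * u4 x y < 0"
proof -
  have t1: "turn (P1 \<rho> \<sigma> x y) (P2 \<rho> \<sigma> x y) (P3 \<rho> \<sigma> x y) = u1 x y * u2 x y * (\<sigma> - \<rho>)"
    unfolding turn_def D1 D2 det2_def by (simp add: algebra_simps)
  have t3: "turn (P3 \<rho> \<sigma> x y) (P4 \<rho> \<sigma> x y) (P1 \<rho> \<sigma> x y) = u3 x y * u4 x y * (\<rho> - \<sigma>)"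
    unfolding turn_def D3 D4 det2_def by (simp add: algebra_simps)
  have "turn (P1 \<rho> \<sigma> x y) (P2 \<rho> \<sigma> x y) (P3 \<rho> \<sigma> x y) * turn (P3 \<rho> \<sigma> x y) (P4 \<rho> \<sigma> x y) (P1 \<rho> \<sigma> x y) > 0"
    using assms unfolding quadP_convex_def convex_quad_def
    by (auto simp: zero_less_mult_iff)
  then have "- ((\<rho>-\<sigma>)^2) * (u1 x y * u2 x y * u3 x y * u4 x y) > 0"
    unfolding t1 t3 by (simp add: algebra_simps power2_eq_square)
  moreover have "(\<rho>-\<sigma>)^2 > 0" using nz by simp
  ultimately show ?thesis by (auto simp: mult_less_0_iff)
qed

lemma uprod: "u1 x y * u2 x y * u3 x y * u4 x y = 16*\<rho>^2*\<sigma>^2*(y^2-\<rho>^2*x^2)*(y^2-\<sigma>^2*x^2)/DD^4"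
proof -
  have "u1 x y * u2 x y * u3 x y * u4 x y = ((2*\<sigma>*(y-\<rho>*x))*(2*\<rho>*(\<sigma>*x-y))*(-2*\<sigma>*(y+\<rho>*x))*(2*\<rho>*(y+\<sigma>*x))) / DD^4"
    unfolding u1_def u2_def u3_def u4_def by (simp add: eval_nat_numeral)
  also have "(2*\<sigma>*(y-\<rho>*x))*(2*\<rho>*(\<sigma>*x-y))*(-2*\<sigma>*(y+\<rho>*x))*(2*\<rho>*(y+\<sigma>*x)) = 16*\<rho>^2*\<sigma>^2*(y^2-\<rho>^2*x^2)*(y^2-\<sigma>^2*x^2)"
    by algebra
  finally show ?thesis .
qed

lemma convex_xy: assumes "quadP_convex \<rho> \<sigma> x y" shows "x * y \<noteq> 0"
proof
  assume "x * y = 0"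
  then have "x = 0 \<or> y = 0" by simp
  then have "u1 x y * u2 x y * u3 x y * u4 x y \<ge> 0" unfolding uprod
  proof
    assume "x = 0"
    then show "0 \<le> 16*\<rho>^2*\<sigma>^2*(y^2-\<rho>^2*x^2)*(y^2-\<sigma>^2*x^2)/DD^4" by simp
  next
    assume "y = 0"
    then have "16*\<rho>^2*\<sigma>^2*(y^2-\<rho>^2*x^2)*(y^2-\<sigma>^2*x^2) = 16*(\<rho>*\<sigma>*\<rho>*\<sigma>*x*x)^2"
      by (simp add: algebra_simps power2_eq_square)
    then show "0 \<le> 16*\<rho>^2*\<sigma>^2*(y^2-\<rho>^2*x^2)*(y^2-\<sigma>^2*x^2)/DD^4" by simp
  qed
  with convex_neg[OF assms] show False by simp
qed

end

lemma sqcases: assumes "(a::real)^2 * k = 1" "c^2 * k = 1" shows "c = a \<or> c = -a"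
proof -
  have "k \<noteq> 0" using assms by auto
  then have "c^2 = a^2" using assms by (metis mult_right_cancel)
  then show ?thesis by (simp add: power2_eq_iff)
qed

theorem mainTheorem3:
  fixes \<rho> \<sigma> e :: real and ua ub uc ud :: "real \<times> real"
  assumes "\<rho> \<noteq> 0" and "\<sigma> \<noteq> 0" and "\<rho> \<noteq> \<sigma>" and "\<rho> \<noteq> - \<sigma>"
    and "norm ua = 1" and "det2 ua (1, \<rho>) = 0"
    and "norm ub = 1" and "det2 ub (1, \<sigma>) = 0"
    and "norm uc = 1" and "det2 uc (1, - \<rho>) = 0"
    and "norm ud = 1" and "det2 ud (1, - \<sigma>) = 0"
    and "e = 1 \<or> e = -1"
    and "\<exists>x0 y0. quadP_convex \<rho> \<sigma> x0 y0 \<and>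
           side_a \<rho> \<sigma> ua x0 y0 > 0 \<and> side_b \<rho> \<sigma> ub x0 y0 > 0 \<and>
           side_c \<rho> \<sigma> uc x0 y0 > 0 \<and> side_d \<rho> \<sigma> ud x0 y0 > 0 \<and>
           areaA e \<rho> \<sigma> x0 y0 > 0"
  shows "(\<exists>lam mu. \<forall>x y. areaA e \<rho> \<sigma> x y = lam * (x * y) \<and>
                    Bsq \<rho> \<sigma> ua ub uc ud x y = mu * (x * y)^2)
         \<and> (\<exists>k. \<forall>x y. quadP_convex \<rho> \<sigma> x y \<longrightarrow>
                    (areaA e \<rho> \<sigma> x y)^2 / Bsq \<rho> \<sigma> ua ub uc ud x y = k)"
proof -
  interpret rs \<rho> \<sigma> using assms(1-4) by unfold_locales
  define ta where "ta = fst ua"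
  define tb where "tb = fst ub"
  define tc where "tc = fst uc"
  define td where "td = fst ud"
  have sa: "\<And>x y. side_a \<rho> \<sigma> ua x y = (ta*(1+\<rho>^2))*u1 x y" unfolding ta_def using sideA assms(5,6) by blast
  have sb: "\<And>x y. side_b \<rho> \<sigma> ub x y = (tb*(1+\<sigma>^2))*u2 x y" unfolding tb_def using sideB assms(7,8) by blast
  have sc: "\<And>x y. side_c \<rho> \<sigma> uc x y = (tc*(1+\<rho>^2))*u3 x y" unfolding tc_def using sideC assms(9,10) by blast
  have sd: "\<And>x y. side_d \<rho> \<sigma> ud x y = (td*(1+\<sigma>^2))*u4 x y" unfolding td_def using sideD assms(11,12) by blast
  have na: "ta^2 * (1+\<rho>^2) = 1" unfolding ta_def using unitv(2) assms(5,6) by blast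
  have nb: "tb^2 * (1+\<sigma>^2) = 1" unfolding tb_def using unitv(2) assms(7,8) by blast
  have nc: "tc^2 * (1+\<rho>^2) = 1" unfolding tc_def using unitv(2)[OF assms(9,10)] by simp
  have nd: "td^2 * (1+\<sigma>^2) = 1" unfolding td_def using unitv(2)[OF assms(11,12)] by simp
  obtain x0 y0 where cv: "quadP_convex \<rho> \<sigma> x0 y0" and p:
     "side_a \<rho> \<sigma> ua x0 y0 > 0" "side_b \<rho> \<sigma> ub x0 y0 > 0"
     "side_c \<rho> \<sigma> uc x0 y0 > 0" "side_d \<rho> \<sigma> ud x0 y0 > 0" using assms(14) by blast
  have U: "u1 x0 y0 * u2 x0 y0 * u3 x0 y0 * u4 x0 y0 < 0" using convex_neg[OF cv] .
  have "side_a \<rho> \<sigma> ua x0 y0 * side_b \<rho> \<sigma> ub x0 y0 * side_c \<rho> \<sigma> uc x0 y0 * side_d \<rho> \<sigma> ud x0 y0 > 0"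
    using p by simp
  also have "side_a \<rho> \<sigma> ua x0 y0 * side_b \<rho> \<sigma> ub x0 y0 * side_c \<rho> \<sigma> uc x0 y0 * side_d \<rho> \<sigma> ud x0 y0
     = (ta*tb*tc*td) * (((1+\<rho>^2)*(1+\<sigma>^2))^2 * (u1 x0 y0 * u2 x0 y0 * u3 x0 y0 * u4 x0 y0))"
    unfolding sa sb sc sd by (simp add: algebra_simps power2_eq_square)
  finally have pos: "0 < (ta*tb*tc*td) * (((1+\<rho>^2)*(1+\<sigma>^2))^2 * (u1 x0 y0 * u2 x0 y0 * u3 x0 y0 * u4 x0 y0))" .
  have "1+\<rho>^2 > 0" "1+\<sigma>^2 > 0" by (simp_all add: add_pos_nonneg)
  then have "((1+\<rho>^2)*(1+\<sigma>^2))^2 > 0" by simp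
  with U have "((1+\<rho>^2)*(1+\<sigma>^2))^2 * (u1 x0 y0 * u2 x0 y0 * u3 x0 y0 * u4 x0 y0) < 0"
    by (simp add: mult_pos_neg)
  moreover have "\<And>T N::real. 0 < T*N \<Longrightarrow> N < 0 \<Longrightarrow> T < 0" by (auto simp: zero_less_mult_iff)
  ultimately have T: "ta*tb*tc*td < 0" using pos by blast
  have c1: "tc = ta \<or> tc = -ta" using sqcases[OF na nc] .
  have c2: "td = tb \<or> td = -tb" using sqcases[OF nb nd] .
  define A where "A = ta*(1+\<rho>^2)"
  define B where "B = tb*(1+\<sigma>^2)"
  define mu where "mu = 16*\<rho>^2*\<sigma>^2*(A*\<sigma>+B*\<rho>)*(A+B)*(A*\<sigma>-B*\<rho>)*(B-A)/DD^4"
  have Bs: "\<And>x y. Bsq \<rho> \<sigma> ua ub uc ud x y = mu * (x*y)^2"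
  proof -
    fix x y
    have "(tc = ta \<and> td = -tb) \<or> (tc = -ta \<and> td = tb)"
      using c1 c2 T by (auto simp: mult_less_0_iff zero_less_mult_iff)
    then show "Bsq \<rho> \<sigma> ua ub uc ud x y = mu * (x*y)^2"
    proof
      assume h: "tc = ta \<and> td = -tb"
      have "Bsq \<rho> \<sigma> ua ub uc ud x y = brahm (A*u1 x y) (B*u2 x y) (A*u3 x y) (-(B*u4 x y))"
        unfolding Bsq_def sa sb sc sd A_def B_def using h by simp
      then show ?thesis unfolding mu_def brahm1 .
    next
      assume h: "tc = -ta \<and> td = tb"
      have "Bsq \<rho> \<sigma> ua ub uc ud x y = brahm (A*u1 x y) (B*u2 x y) (-(A*u3 x y)) (B*u4 x y)"
        unfolding Bsq_def sa sb sc sd A_def B_def using h by simp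
      then show ?thesis unfolding mu_def brahm2 .
    qed
  qed
  define lam where "lam = e * (-4*\<rho>*\<sigma>/(\<rho>\<^sup>2-\<sigma>\<^sup>2))"
  have Ar: "\<And>x y. areaA e \<rho> \<sigma> x y = lam * (x*y)" unfolding lam_def by (rule area)
  show ?thesis
  proof
    show "\<exists>lam mu. \<forall>x y. areaA e \<rho> \<sigma> x y = lam * (x * y) \<and>
                    Bsq \<rho> \<sigma> ua ub uc ud x y = mu * (x * y)^2" using Ar Bs by blast
    show "\<exists>k. \<forall>x y. quadP_convex \<rho> \<sigma> x y \<longrightarrow>
                    (areaA e \<rho> \<sigma> x y)^2 / Bsq \<rho> \<sigma> ua ub uc ud x y = k"
    proof (intro exI allI impI)
      fix x y assume "quadP_convex \<rho> \<sigma> x y"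
      then have "x*y \<noteq> 0" by (rule convex_xy)
      then show "(areaA e \<rho> \<sigma> x y)^2 / Bsq \<rho> \<sigma> ua ub uc ud x y = lam^2/mu"
        unfolding Ar Bs by (simp add: power_mult_distrib)
    qed
  qed
qed

end
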